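(* Let $n\ge 2$. A $(2n-2)\times(2n-2)$ lower triangular matrix $F=(F_{i,j})_{0\le i,j\le 2n-3}$ is the $\mathbf{F}$-matrix of some fully heterochronous ranked tree shape with $n$ leaves if and only if its entries $F_{i,j}$, $0\le j\le i\le 2n-3$, form an $(n,2n-3,2n-3)$ $\mathbf{F}$-sequence.
   Context: A fully heterochronous ranked tree shape with $n$ leaves is a rooted full binary tree (every node has out-degree $0$ or $2$), without leaf labels, with $n$ leaves, together with a total ordering of all $2n-1$ nodes (leaves included) such that nodes appear in increasing order along every path from the root to a leaf; the position of a node in this order, numbered $0,\dots,2n-2$, is its rank. Its $\mathbf{F}$-matrix is the $(2n-2)\times(2n-2)$ lower triangular matrix $F$, indices from $0$ to $2n-3$, where for $0\le j\le i$ the entry $F_{i,j}$ is the number of edges from a parent node $v$ to a child node $w$ with rank of $v$ at most $j$ and rank of $w$ larger than $i$. For a doubly indexed sequence $f$, with the convention $f_{k,\ell}=0$ whenever $k$ or $\ell$ is negative, define $L_f(i,j):=\max(f_{i,j-1}, f_{i-1,j}-1, f_{i,j-1}+f_{i-1,j}-f_{i-1,j-1}-1)$ and $U_f(i,j):=\min(f_{i-1,j}, f_{i,j-1}+f_{i-1,j}-f_{i-1,j-1})$. For non-negative integers $M\le N\le 2n-3$, with $B=\max(N-1,M)$, an $(n,N,M)$ $\mathbf{F}$-sequence is a doubly indexed sequence $f_{i,j}$ of non-negative integers defined exactly for the valid indices $(i,j)\in\{(i,j):0\le j\le i\le N-1\}\cup\{(N,j):0\le j\le M\}$ such that: (1)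 $f_{i,i}$ ($0\le i\le B$) are positive integers with $f_{0,0}=2$, $f_{i,i}=f_{i-1,i-1}\pm1$ for $1\le i\le B$, and $f_{i,i}\le 2n-i-2$ for $0\le i\le B$; (2) $L_f(i,j)\le f_{i,j}\le U_f(i,j)$ for valid $(i,j)$ with $0\le j\le i-2$; (3) for valid $(i,j)$ with $0\le j\le i-1$, if $f_{i-1,j}=f_{i-1,i-1}$ then $f_{i,j}=f_{i-1,i-1}-1$. *)

theory Defs
  imports Main
begin

text \<open>A fully heterochronous ranked tree shape with n leaves is encoded by identifying
each node with its rank 0..2n-2 and recording the parent of every non-root node:
p v is the rank of the parent of the node of rank v (1 \<le> v \<le> 2n-2).
Ranks increase along root-to-leaf paths (p v < v), so the node of rank 0 is the root,
and every node has out-degree 0 or 2 (full binary).  With 2n-1 nodes this forces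
exactly n leaves.\<close>

definition children :: "nat \<Rightarrow> (nat \<Rightarrow> nat) \<Rightarrow> nat \<Rightarrow> nat set" where
  "children n p u = {v. 1 \<le> v \<and> v \<le> 2*n - 2 \<and> p v = u}"

definition fh_ranked_tree :: "nat \<Rightarrow> (nat \<Rightarrow> nat) \<Rightarrow> bool" where
  "fh_ranked_tree n p \<longleftrightarrow>
     (\<forall>v. 1 \<le> v \<and> v \<le> 2*n - 2 \<longrightarrow> p v < v) \<and>
     (\<forall>u \<le> 2*n - 2. card (children n p u) = 0 \<or> card (children n p u) = 2)"

text \<open>Edges are the pairs (p w, w) for 1 \<le> w \<le> 2n-2.  F-matrix entry (i,j), j \<le> i:
number of edges (v,w) with rank v \<le> j and rank w > i; zero above the diagonal.\<close>

definition F_matrix :: "nat \<Rightarrow> (nat \<Rightarrow> nat) \<Rightarrow> nat \<Rightarrow> nat \<Rightarrow> int" where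
  "F_matrix n p i j =
     (if j \<le> i then int (card {w. 1 \<le> w \<and> w \<le> 2*n - 2 \<and> p w \<le> j \<and> i < w}) else 0)"

definition fa :: "(nat \<Rightarrow> nat \<Rightarrow> int) \<Rightarrow> int \<Rightarrow> int \<Rightarrow> int" where
  "fa f k l = (if k < 0 \<or> l < 0 then 0 else f (nat k) (nat l))"

definition L_f :: "(nat \<Rightarrow> nat \<Rightarrow> int) \<Rightarrow> int \<Rightarrow> int \<Rightarrow> int" where
  "L_f f i j = max (fa f i (j-1)) (max (fa f (i-1) j - 1)
                  (fa f i (j-1) + fa f (i-1) j - fa f (i-1) (j-1) - 1))"

definition U_f :: "(nat \<Rightarrow> nat \<Rightarrow> int) \<Rightarrow> int \<Rightarrow> int \<Rightarrow> int" where
  "U_f f i j = min (fa f (i-1) j) (fa f i (j-1) + fa f (i-1) j - fa f (i-1) (j-1))"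

definition valid_idx :: "nat \<Rightarrow> nat \<Rightarrow> nat \<Rightarrow> nat \<Rightarrow> bool" where
  "valid_idx N M i j \<longleftrightarrow> (j \<le> i \<and> i < N) \<or> (i = N \<and> j \<le> M)"

definition F_sequence :: "nat \<Rightarrow> nat \<Rightarrow> nat \<Rightarrow> (nat \<Rightarrow> nat \<Rightarrow> int) \<Rightarrow> bool" where
  "F_sequence n N M f \<longleftrightarrow>
     M \<le> N \<and> int N \<le> 2 * int n - 3 \<and>
     (let B = max (int N - 1) (int M) in
       (\<forall>i j. valid_idx N M i j \<longrightarrow> f i j \<ge> 0) \<and>
       (\<forall>i. int i \<le> B \<longrightarrow> f i i > 0) \<and>
       f 0 0 = 2 \<and>
       (\<forall>i. 1 \<le> i \<and> int i \<le> B \<longrightarrow>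
            f i i = f (i-1) (i-1) + 1 \<or> f i i = f (i-1) (i-1) - 1) \<and>
       (\<forall>i. int i \<le> B \<longrightarrow> f i i \<le> 2 * int n - int i - 2) \<and>
       (\<forall>i j. valid_idx N M i j \<and> j + 2 \<le> i \<longrightarrow>
            L_f f (int i) (int j) \<le> f i j \<and> f i j \<le> U_f f (int i) (int j)) \<and>
       (\<forall>i j. valid_idx N M i j \<and> j < i \<longrightarrow>
            f (i-1) j = f (i-1) (i-1) \<longrightarrow> f i j = f (i-1) (i-1) - 1))"

end

theory Submission
  imports Defs
begin


definition SS :: "nat \<Rightarrow> (nat \<Rightarrow> nat) \<Rightarrow> nat \<Rightarrow> nat \<Rightarrow> nat set" where
  "SS n p i j = {w. 1 \<le> w \<and> w \<le> 2*n - 2 \<and> p w \<le> j \<and> i < w}"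

lemma FM_SS: "j \<le> i \<Longrightarrow> F_matrix n p i j = int (card (SS n p i j))"
  by (simp add: F_matrix_def SS_def)

lemma SS_fin[simp]: "finite (SS n p i j)"
  by (rule finite_subset[of _ "{..2*n-2}"]) (auto simp: SS_def)

lemma SS_sub: "SS n p i j \<subseteq> {i<..2*n-2}"
  by (auto simp: SS_def)

lemma SS_card_le: "card (SS n p i j) \<le> 2*n-2-i"
  using card_mono[OF _ SS_sub[of n p i j]] by simp

lemma SS_row: "1 \<le> i \<Longrightarrow> i \<le> 2*n-2 \<Longrightarrow>
  card (SS n p (i-1) j) = card (SS n p i j) + (if p i \<le> j then 1 else 0)"
proof -
  assume a: "1 \<le> i" "i \<le> 2*n-2"
  have "SS n p (i-1) j = (if p i \<le> j then insert i (SS n p i j) else SS n p i j)"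
  proof -
    have h: "\<And>x. i - 1 < x \<Longrightarrow> x \<noteq> i \<Longrightarrow> i < x" using a by arith
    show ?thesis using a h by (auto simp: SS_def)
  qed
  moreover have "i \<notin> SS n p i j" by (simp add: SS_def)
  ultimately show ?thesis by simp
qed

lemma SS_mono: "j \<le> j' \<Longrightarrow> SS n p i j \<subseteq> SS n p i j'"
  by (auto simp: SS_def)

lemma SS_col: "card (SS n p i (Suc j)) = card (SS n p i j) + card {w \<in> SS n p i (Suc j). p w = Suc j}"
proof -
  have "SS n p i (Suc j) = SS n p i j \<union> {w \<in> SS n p i (Suc j). p w = Suc j}"
    by (auto simp: SS_def)
  moreover have "SS n p i j \<inter> {w \<in> SS n p i (Suc j). p w = Suc j} = {}" by (auto simp: SS_def)
  ultimately show ?thesis by (metis (no_types, lifting) SS_fin card_Un_disjoint finite_Un)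
qed

lemma fa1: "fa f (int i) (int j) = f i j" by (simp add: fa_def)
lemma fa2: "fa f (int i - 1) (int j) = (if i = 0 then 0 else f (i-1) j)"
  by (simp add: fa_def nat_diff_distrib')
lemma fa3: "fa f (int i) (int j - 1) = (if j = 0 then 0 else f i (j-1))"
  by (simp add: fa_def nat_diff_distrib')
lemma fa4: "fa f (int i - 1) (int j - 1) = (if i = 0 \<or> j = 0 then 0 else f (i-1) (j-1))"
  by (simp add: fa_def nat_diff_distrib')

lemma step_fun:
  fixes d :: "nat \<Rightarrow> int"
  assumes "w \<ge> 1" "\<forall>j<w. d j = 0 \<or> d j = 1" "d (w-1) = 1"
    "\<forall>j. j+1 < w \<longrightarrow> d j = 1 \<longrightarrow> d (j+1) = 1"
  shows "(LEAST j. d j = 1) < w \<and> (\<forall>j<w. d j = (if (LEAST j. d j = 1) \<le> j then 1 else 0))"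
proof -
  define q where "q = (LEAST j. d j = 1)"
  have q1: "d q = 1" unfolding q_def by (rule LeastI[of _ "w-1"]) (use assms in auto)
  have qw: "q < w" using Least_le[of "\<lambda>j. d j = 1" "w-1"] assms unfolding q_def by auto
  have "d j = (if q \<le> j then 1 else 0)" if "j < w" for j
  proof (cases "q \<le> j")
    case True
    have "d j = 1" using True that
    proof (induction j rule: dec_induct)
      case base then show ?case using q1 by simp
    next
      case (step k) then show ?case using assms(4) by (metis Suc_eq_plus1 Suc_lessD)
    qed
    then show ?thesis using True by simp
  next
    case False
    then have "d j \<noteq> 1" using not_less_Least unfolding q_def by (metis not_le)
    then show ?thesis using False assms(2) that by auto
  qed
  then show ?thesis using qw unfolding q_def by blast
qed



lemma valid_NN: "valid_idx N N i j \<longleftrightarrow> j \<le> i \<and> i \<le> N"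
  by (auto simp: valid_idx_def)

lemma LU_pos:
  assumes "1 \<le> i" "1 \<le> j"
  shows "L_f f (int i) (int j) = max (f i (j-1)) (max (f (i-1) j - 1) (f i (j-1) + f (i-1) j - f (i-1) (j-1) - 1))"
    "U_f f (int i) (int j) = min (f (i-1) j) (f i (j-1) + f (i-1) j - f (i-1) (j-1))"
  using assms by (auto simp: L_f_def U_f_def fa1 fa2 fa3 fa4)

lemma forward:
  assumes n2: "n \<ge> 2" and T: "fh_ranked_tree n p"
    and fF: "\<forall>i j. j \<le> i \<and> i \<le> 2*n-3 \<longrightarrow> f i j = int (card (SS n p i j))"
  shows "F_sequence n (2*n-3) (2*n-3) f"
proof -
  define N where "N = 2*n-3"
  have mN: "2*n-2 = N+1" using n2 unfolding N_def by simp
  have pv: "\<And>v. 1 \<le> v \<Longrightarrow> v \<le> N+1 \<Longrightarrow> p v < v" using T mN unfolding fh_ranked_tree_def by auto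
  have ch: "\<And>u. u \<le> N+1 \<Longrightarrow> card (children n p u) = 0 \<or> card (children n p u) = 2"
    using T mN unfolding fh_ranked_tree_def by auto
  have chS: "children n p u = {w \<in> SS n p u u. p w = u}" for u
    using pv mN unfolding children_def SS_def by fastforce
  have fc: "\<And>i j. j \<le> i \<Longrightarrow> i \<le> N \<Longrightarrow> f i j = int (card (SS n p i j))"
    using fF N_def by auto
  have R: "f (i-1) j = f i j + (if p i \<le> j then 1 else 0)" if "1 \<le> i" "i \<le> N" "j < i" for i j
    using SS_row[of i n p j] that fc[of j i] fc[of j "i-1"] mN by auto
  have Cm: "f i j \<le> f i (j+1)" if "j+1 \<le> i" "i \<le> N" for i j
    using that fc[of j i] fc[of "j+1" i] card_mono[OF SS_fin SS_mono[of j "j+1" n p i]] by auto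
  have Cd: "f i (j+1) = f i j + int (card {w \<in> SS n p i (Suc j). p w = Suc j})"
    if "j+1 \<le> i" "i \<le> N" for i j
    using that fc[of j i] fc[of "j+1" i] SS_col[of n p i j] by auto
  have pos: "f i i > 0" if "i \<le> N" for i
  proof -
    have "i+1 \<in> SS n p i i" using pv[of "i+1"] that mN unfolding SS_def by auto
    then have "0 < card (SS n p i i)" using SS_fin card_gt_0_iff by blast
    then show ?thesis using fc[of i i] that by linarith
  qed
  have D: "f i i = f (i-1) (i-1) - 1 + int (card (children n p i))" if "1 \<le> i" "i \<le> N" for i
  proof -
    have "f (i-1) (i-1) = f i (i-1) + 1" using R[of i "i-1"] that pv[of i] by auto
    moreover have "f i i = f i (i-1) + int (card (children n p i))"
      using Cd[of "i-1" i] that chS[of i] by auto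
    ultimately show ?thesis by simp
  qed
  have f00: "f 0 0 = 2"
  proof -
    have "children n p 0 = SS n p 0 0" unfolding chS SS_def by auto
    then show ?thesis using ch[of 0] pos[of 0] fc[of 0 0] by auto
  qed
  have ub: "f i i \<le> 2 * int n - int i - 2" if "i \<le> N" for i
    using fc[of i i] that SS_card_le[of n p i i] n2 unfolding N_def by auto
  have dd: "f i i = f (i-1) (i-1) + 1 \<or> f i i = f (i-1) (i-1) - 1" if "1 \<le> i" "i \<le> N" for i
    using D[OF that] ch[of i] that by auto
  have nn: "f i j \<ge> 0" if "j \<le> i" "i \<le> N" for i j using fc[OF that] by simp
  have LU: "L_f f (int i) (int j) \<le> f i j \<and> f i j \<le> U_f f (int i) (int j)"
    if "j + 2 \<le> i" "i \<le> N" for i j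
  proof (cases j)
    case 0
    have "f (i-1) 0 = f i 0 + (if p i \<le> 0 then 1 else 0)" using R[of i 0] that by auto
    then show ?thesis using 0 that nn[of 0 i]
      by (auto simp: L_f_def U_f_def fa1 fa2 fa3 fa4 simp del: of_nat_0)
  next
    case (Suc k)
    have r1: "f (i-1) k = f i k + (if p i \<le> k then 1 else 0)" using R[of i k] that Suc by auto
    have r2: "f (i-1) (Suc k) = f i (Suc k) + (if p i \<le> Suc k then 1 else 0)" using R[of i "Suc k"] that Suc by auto
    have c1: "f i k \<le> f i (Suc k)" using Cm[of k i] that Suc by auto
    show ?thesis using Suc that r1 r2 c1 LU_pos[of i j f]
      by (auto split: if_splits)
  qed
  have C3: "f i j = f (i-1) (i-1) - 1" if "j < i" "i \<le> N" "f (i-1) j = f (i-1) (i-1)" for i j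
  proof -
    have eqc: "card (SS n p (i-1) j) = card (SS n p (i-1) (i-1))"
      using that fc[of j "i-1"] fc[of "i-1" "i-1"] by auto
    have sub: "SS n p (i-1) j \<subseteq> SS n p (i-1) (i-1)" using SS_mono that by auto
    have "SS n p (i-1) j = SS n p (i-1) (i-1)" using card_subset_eq[OF SS_fin sub eqc] .
    moreover have "i \<in> SS n p (i-1) (i-1)" using pv[of i] that mN unfolding SS_def by auto
    ultimately have "p i \<le> j" unfolding SS_def by auto
    then show ?thesis using R[of i j] that by auto
  qed
  have iN: "int (2*n-3) = 2*int n - 3" using n2 by simp
  have B: "max (int N - 1) (int N) = int N" by simp
  show ?thesis
    unfolding F_sequence_def Let_def N_def[symmetric] B valid_NN
    using nn pos f00 dd ub LU C3 iN by (auto simp: N_def)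
qed



lemma LU_zero:
  assumes "1 \<le> i"
  shows "L_f f (int i) (int 0) = max 0 (f (i-1) 0 - 1)" "U_f f (int i) (int 0) = f (i-1) 0"
  using assms by (auto simp: L_f_def U_f_def fa_def nat_diff_distrib')

lemma backward:
  assumes n2: "n \<ge> 2"
    and lower: "\<forall>i j. i < j \<and> j \<le> 2*n - 3 \<longrightarrow> F i j = 0"
    and FS: "F_sequence n (2*n - 3) (2*n - 3) F"
  shows "\<exists>p. fh_ranked_tree n p \<and>
            (\<forall>i j. i \<le> 2*n - 3 \<and> j \<le> 2*n - 3 \<longrightarrow> F i j = F_matrix n p i j)"
proof -
  define N where "N = 2*n-3"
  have mN: "2*n-2 = N+1" using n2 unfolding N_def by simp
  have iN: "int N = 2*int n - 3" using n2 N_def by simp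
  have N1: "N \<ge> 1" using n2 N_def by simp
  have B: "max (int N - 1) (int N) = int N" by simp
  have FS': "(\<forall>i j. j \<le> i \<and> i \<le> N \<longrightarrow> F i j \<ge> 0) \<and>
       (\<forall>i. i \<le> N \<longrightarrow> F i i > 0) \<and>
       F 0 0 = 2 \<and>
       (\<forall>i. 1 \<le> i \<and> i \<le> N \<longrightarrow>
            F i i = F (i-1) (i-1) + 1 \<or> F i i = F (i-1) (i-1) - 1) \<and>
       (\<forall>i. i \<le> N \<longrightarrow> F i i \<le> 2 * int n - int i - 2) \<and>
       (\<forall>i j. j + 2 \<le> i \<and> i \<le> N \<longrightarrow>
            L_f F (int i) (int j) \<le> F i j \<and> F i j \<le> U_f F (int i) (int j)) \<and>
       (\<forall>i j. j < i \<and> i \<le> N \<longrightarrow>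
            F (i-1) j = F (i-1) (i-1) \<longrightarrow> F i j = F (i-1) (i-1) - 1)"
    using FS unfolding F_sequence_def Let_def N_def[symmetric] B valid_NN by auto
  have nn: "\<And>i j. j \<le> i \<Longrightarrow> i \<le> N \<Longrightarrow> F i j \<ge> 0" using FS' by blast
  have pos: "\<And>i. i \<le> N \<Longrightarrow> F i i > 0" using FS' by blast
  have f00: "F 0 0 = 2" using FS' by blast
  have dd: "\<And>i. 1 \<le> i \<Longrightarrow> i \<le> N \<Longrightarrow> F i i = F (i-1) (i-1) + 1 \<or> F i i = F (i-1) (i-1) - 1"
    using FS' by blast
  have ub: "\<And>i. i \<le> N \<Longrightarrow> F i i \<le> 2 * int n - int i - 2" using FS' by blast
  have LU: "\<And>i j. j + 2 \<le> i \<Longrightarrow> i \<le> N \<Longrightarrow>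
            L_f F (int i) (int j) \<le> F i j \<and> F i j \<le> U_f F (int i) (int j)" using FS' by blast
  have C3: "\<And>i j. j < i \<Longrightarrow> i \<le> N \<Longrightarrow>
            F (i-1) j = F (i-1) (i-1) \<Longrightarrow> F i j = F (i-1) (i-1) - 1" using FS' by blast
  have sub: "F (i-1) j - 1 \<le> F i j \<and> F i j \<le> F (i-1) j" if "j + 2 \<le> i" "i \<le> N" for i j
  proof (cases "j = 0")
    case True
    have i1: "1 \<le> i" using that by simp
    have "max 0 (F (i-1) 0 - 1) \<le> F i 0 \<and> F i 0 \<le> F (i-1) 0"
      using LU[OF that] unfolding True LU_zero[OF i1] by simp
    then show ?thesis using True by (auto simp only: max.bounded_iff)
  next
    case False
    have i1: "1 \<le> i" and j1: "1 \<le> j" using that False by auto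
    show ?thesis using LU[OF that] unfolding LU_pos[OF i1 j1] by (auto simp only: max.bounded_iff min.bounded_iff)
  qed
  have monoU: "F i j \<le> F i (j-1) + F (i-1) j - F (i-1) (j-1)"
    if "1 \<le> j" "j + 2 \<le> i" "i \<le> N" for i j
  proof -
    have i1: "1 \<le> i" using that by simp
    show ?thesis using LU[OF that(2,3)] unfolding LU_pos[OF i1 that(1)] by (auto simp only: min.bounded_iff)
  qed
  have monoL: "F i (j-1) \<le> F i j"
    if "1 \<le> j" "j + 2 \<le> i" "i \<le> N" for i j
  proof -
    have i1: "1 \<le> i" using that by simp
    show ?thesis using LU[OF that(2,3)] unfolding LU_pos[OF i1 that(1)] by (auto simp only: max.bounded_iff)
  qed
  have diag1: "F i (i-1) = F (i-1) (i-1) - 1" if "1 \<le> i" "i \<le> N" for i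
    using C3[of "i-1" i] that by auto
  have FNN: "F N N = 1" using pos[of N] ub[of N] iN by auto
  have inv: "F i j \<le> F i i" if "i \<le> N" "j \<le> i" for i j
    using that
  proof (induction i arbitrary: j)
    case 0 then show ?case by simp
  next
    case (Suc i)
    show ?case
    proof (cases "j = Suc i \<or> j = i")
      case True
      then show ?thesis using diag1[of "Suc i"] dd[of "Suc i"] Suc.prems by auto
    next
      case False
      then have j: "j + 2 \<le> Suc i" using Suc.prems by auto
      have h1: "F i j \<le> F i i" using Suc.IH[of j] Suc.prems j by auto
      show ?thesis
      proof (cases "F i j = F i i")
        case True
        then show ?thesis using C3[of j "Suc i"] Suc.prems j dd[of "Suc i"] by auto
      next
        case False
        then show ?thesis using h1 sub[of j "Suc i"] Suc.prems j dd[of "Suc i"] by auto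
      qed
    qed
  qed
  define G where "G i j = (if i \<le> N then F i j else 0)" for i j
  define d where "d w j = G (w-1) j - G w j" for w j
  have A: "(\<forall>j<w. d w j = 0 \<or> d w j = 1) \<and> d w (w-1) = 1 \<and>
           (\<forall>j. j+1<w \<longrightarrow> d w j = 1 \<longrightarrow> d w (j+1) = 1)"
    if "1 \<le> w" "w \<le> N+1" for w
  proof (cases "w \<le> N")
    case True
    have dw: "d w j = F (w-1) j - F w j" for j using True unfolding d_def G_def by auto
    have a1: "d w j = 0 \<or> d w j = 1" if "j < w" for j
    proof (cases "j = w-1")
      case True then show ?thesis using diag1[of w] \<open>1 \<le> w\<close> \<open>w \<le> N\<close> dw by auto
    next
      case False
      have "j + 2 \<le> w" using False that by linarith
      then show ?thesis using sub[of j w] \<open>w \<le> N\<close> dw by force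
    qed
    have a3: "d w (j+1) = 1" if "j+1 < w" "d w j = 1" for j
    proof (cases "j+1 = w-1")
      case True then show ?thesis using diag1[of w] \<open>1 \<le> w\<close> \<open>w \<le> N\<close> dw by auto
    next
      case False
      have j2: "j + 3 \<le> w" using False that by linarith
      have "d w (j+1) \<ge> d w j" using monoU[of "j+1" w] j2 \<open>w \<le> N\<close> dw by simp
      then show ?thesis using sub[of "j+1" w] j2 \<open>w \<le> N\<close> that dw by force
    qed
    show ?thesis using a1 a3 diag1[of w] that True dw by auto
  next
    case False
    then have w: "w = N+1" using that by auto
    have dw: "d w j = F N j" for j using w unfolding d_def G_def by auto
    have a3: "d w (j+1) = 1" if jw: "j+1 < w" and dj: "d w j = 1" for j
    proof -
      consider "j+1 = N" | "j+2 = N" | "j+3 \<le> N" using jw w by linarith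
      then show ?thesis
      proof cases
        case 1 then show ?thesis using dw FNN by auto
      next
        case 2
        have "F (N-1) (N-1) = 2" using dd[of N] FNN pos[of "N-1"] N1 by auto
        moreover have "j+1 = N-1" using 2 by simp
        ultimately show ?thesis using diag1[of N] N1 dw by simp
      next
        case 3
        then show ?thesis using monoL[of "j+1" N] inv[of N "j+1"] FNN dw dj by auto
      qed
    qed
    have a1: "d w j = 0 \<or> d w j = 1" if "j < w" for j
    proof -
      have "j \<le> N" using that w by simp
      then have "0 \<le> F N j" "F N j \<le> 1" using nn[of j N] inv[of N j] FNN by auto
      then show ?thesis using dw[of j] by linarith
    qed
    have a2: "d w (w-1) = 1" using dw FNN w by simp
    show ?thesis using a1 a2 a3 by blast
  qed
  define p where "p w = (LEAST j. d w j = 1)" for w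
  have P: "p w < w \<and> (\<forall>j<w. d w j = (if p w \<le> j then 1 else 0))"
    if "1 \<le> w" "w \<le> N+1" for w
  proof -
    have A': "(\<forall>j<w. d w j = 0 \<or> d w j = 1)" "d w (w-1) = 1"
      "(\<forall>j. j+1<w \<longrightarrow> d w j = 1 \<longrightarrow> d w (j+1) = 1)" using A[OF that] by blast+
    show ?thesis unfolding p_def by (rule step_fun[OF that(1) A'])
  qed
  have card: "int (card (SS n p (N+1-k) j)) = G (N+1-k) j" if "k \<le> N+1" "j \<le> N+1-k" for k j
    using that
  proof (induction k arbitrary: j)
    case 0
    have "SS n p (N+1) j = {}" using mN unfolding SS_def by auto
    then show ?case unfolding G_def by simp
  next
    case (Suc k)
    define i where "i = N+1 - Suc k"
    have i1: "i + 1 = N+1-k" using Suc.prems unfolding i_def by auto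
    have r: "card (SS n p i j) = card (SS n p (i+1) j) + (if p (i+1) \<le> j then 1 else 0)"
      using SS_row[of "i+1" n p j] mN i1 by auto
    have ih: "int (card (SS n p (i+1) j)) = G (i+1) j" using Suc.IH[of j] Suc.prems i1 i_def by auto
    have "d (i+1) j = (if p (i+1) \<le> j then 1 else 0)" using P[of "i+1"] i1 Suc.prems i_def by auto
    then show ?case using r ih unfolding i_def[symmetric] d_def by auto
  qed
  have FM: "F i j = F_matrix n p i j" if "i \<le> N" "j \<le> N" for i j
  proof (cases "j \<le> i")
    case True
    have "int (card (SS n p i j)) = G i j" using card[of "N+1-i" j] that True by auto
    then show ?thesis using FM_SS[OF True] that unfolding G_def by auto
  next
    case False
    then show ?thesis using lower that unfolding F_matrix_def N_def by auto
  qed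
  have pv: "\<And>v. 1 \<le> v \<Longrightarrow> v \<le> N+1 \<Longrightarrow> p v < v" using P by blast
  have chS: "children n p u = {w \<in> SS n p u u. p w = u}" for u
    using pv mN unfolding children_def SS_def by fastforce
  have ch: "card (children n p u) = 0 \<or> card (children n p u) = 2" if uN: "u \<le> N+1" for u
  proof -
    consider "u = 0" | "1 \<le> u \<and> u \<le> N" | "u = N+1" using uN by linarith
    then show ?thesis
    proof cases
      case 1
      have "children n p 0 = SS n p 0 0" unfolding chS SS_def by auto
      then show ?thesis using FM[of 0 0] FM_SS[of 0 0] f00 1 by auto
    next
      case 2
      have "card (SS n p u (Suc (u-1))) = card (SS n p u (u-1)) + card (children n p u)"
        using SS_col[of n p u "u-1"] chS[of u] 2 by auto
      then have "int (card (children n p u)) = F u u - F u (u-1)"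
        using FM[of u u] FM[of u "u-1"] FM_SS[of u u] FM_SS[of "u-1" u] 2 by auto
      then show ?thesis using diag1[of u] dd[of u] 2 by auto
    next
      case 3
      have "children n p u = {}" using pv mN 3 unfolding children_def by fastforce
      then show ?thesis by simp
    qed
  qed
  have "fh_ranked_tree n p" unfolding fh_ranked_tree_def using pv ch mN by auto
  then show ?thesis using FM N_def by auto
qed


theorem corollary2:
  fixes n :: nat and F :: "nat \<Rightarrow> nat \<Rightarrow> int"
  assumes "n \<ge> 2"
    and lower: "\<forall>i j. i < j \<and> j \<le> 2*n - 3 \<longrightarrow> F i j = 0"
  shows "(\<exists>p. fh_ranked_tree n p \<and>
            (\<forall>i j. i \<le> 2*n - 3 \<and> j \<le> 2*n - 3 \<longrightarrow> F i j = F_matrix n p i j))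
         \<longleftrightarrow> F_sequence n (2*n - 3) (2*n - 3) F"
proof
  assume "\<exists>p. fh_ranked_tree n p \<and>
            (\<forall>i j. i \<le> 2*n - 3 \<and> j \<le> 2*n - 3 \<longrightarrow> F i j = F_matrix n p i j)"
  then obtain p where T: "fh_ranked_tree n p"
    and E: "\<forall>i j. i \<le> 2*n - 3 \<and> j \<le> 2*n - 3 \<longrightarrow> F i j = F_matrix n p i j" by blast
  have "\<forall>i j. j \<le> i \<and> i \<le> 2*n-3 \<longrightarrow> F i j = int (card (SS n p i j))"
    using E FM_SS by auto
  then show "F_sequence n (2*n - 3) (2*n - 3) F" using forward[OF assms(1) T] by blast
next
  assume "F_sequence n (2*n - 3) (2*n - 3) F"
  then show "\<exists>p. fh_ranked_tree n p \<and>
            (\<forall>i j. i \<le> 2*n - 3 \<and> j \<le> 2*n - 3 \<longrightarrow> F i j = F_matrix n p i j)"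
    using backward[OF assms(1) lower] by blast
qed

end
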